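(* Fix $\lambda\ge0$ and let $(p^t)_{t\ge0}$ be the iterates of the Blahut–Arimoto iteration. Then for every $t\ge0$ and every $p\in\Delta_n$, $$\chi(p)-\lambda s^Tp-f_\lambda(p^{t+1},p^t)\le\sum_xp_x\ln\frac{p^{t+1}_x}{p^t_x}.$$
   Context: Setup: integers $n\ge 1$, $m\ge1$; density matrices $\rho_1,\dots,\rho_n\in\mathcal{D}^m$ ($m\times m$ complex positive semidefinite, trace one); $\Delta_n$ the probability simplex in $\mathbb{R}^n$; $s\in\mathbb{R}^n$, $s\ge0$; $\lambda\ge0$. All logarithms are natural; matrix logarithms of positive semidefinite matrices are taken on their support, convention $0\ln0=0$. For $p\in\Delta_n$, $\rho_p=\sum_xp_x\rho_x$, $H(\rho)=-\operatorname{Tr}[\rho\ln\rho]$, $\chi(p)=H(\rho_p)-\sum_xp_xH(\rho_x)$. For $p,p'\in\Delta_n$, $$f_\lambda(p,p')=\sum_x p_x\ln\frac{p'_x}{p_x}+\sum_x p_x\operatorname{Tr}[\rho_x(\ln\rho_x-\ln\rho_{p'})]-\lambda s^Tp$$ (terms with $p_x=0$ are zero; value $-\infty$ if $p_x>0=p'_x$ for some $x$). Blahut–Arimoto iteration: $p^0_x=1/n$ for all $x$; given $p^t$ with positive entries, set $\rho^t=\rho_{p^t}$, $r^t_x=\exp\big(\ln p^t_x+\operatorname{Tr}[\rho_x\ln\rho_x]-\operatorname{Tr}[\rho_x\ln\rho^t]-\lambda s_x\big)$ and $p^{t+1}_x=r^t_x/\sum_yr^t_y$. *)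

theory Defs
  imports "Jordan_Normal_Form.Schur_Decomposition"
begin

definition mtrace :: "complex mat \<Rightarrow> complex" where
  "mtrace A = (\<Sum>i<dim_row A. A $$ (i,i))"

definition hermitian_mat :: "complex mat \<Rightarrow> bool" where
  "hermitian_mat A \<longleftrightarrow> A \<in> carrier_mat (dim_row A) (dim_row A) \<and> mat_adjoint A = A"

definition psd_mat :: "complex mat \<Rightarrow> bool" where
  "psd_mat A \<longleftrightarrow> hermitian_mat A \<and>
     (\<forall>v \<in> carrier_vec (dim_row A).
        Im (conjugate v \<bullet> (A *\<^sub>v v)) = 0 \<and> 0 \<le> Re (conjugate v \<bullet> (A *\<^sub>v v)))"

definition density_mat :: "nat \<Rightarrow> complex mat \<Rightarrow> bool" where
  "density_mat m A \<longleftrightarrow> A \<in> carrier_mat m m \<and> psd_mat A \<and> mtrace A = 1"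

definition unitary_mat :: "complex mat \<Rightarrow> bool" where
  "unitary_mat U \<longleftrightarrow> U \<in> carrier_mat (dim_row U) (dim_row U) \<and>
     mat_adjoint U * U = 1\<^sub>m (dim_row U)"

definition spectral_decomp :: "complex mat \<Rightarrow> complex mat \<Rightarrow> (nat \<Rightarrow> real) \<Rightarrow> bool" where
  "spectral_decomp A U lam \<longleftrightarrow> unitary_mat U \<and> dim_row U = dim_row A \<and>
     A = U * mat_diag (dim_row A) (\<lambda>i. complex_of_real (lam i)) * mat_adjoint U"

text \<open>Matrix logarithm of a positive semidefinite matrix, taken on its support
  (eigenvalue 0 is mapped to 0), via the functional calculus.\<close>
definition mat_ln :: "complex mat \<Rightarrow> complex mat" where
  "mat_ln A = (let (U, lam) = (SOME (U, lam). spectral_decomp A U lam) in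
     U * mat_diag (dim_row A) (\<lambda>i. complex_of_real (if lam i > 0 then ln (lam i) else 0))
       * mat_adjoint U)"

text \<open>Von Neumann entropy H(rho) = - Tr[rho ln rho] (the trace is real).\<close>
definition vn_entropy :: "complex mat \<Rightarrow> real" where
  "vn_entropy A = - Re (mtrace (A * mat_ln A))"

definition simplex :: "nat \<Rightarrow> (nat \<Rightarrow> real) set" where
  "simplex n = {p. (\<forall>x<n. 0 \<le> p x) \<and> (\<Sum>x<n. p x) = 1}"

definition mix :: "nat \<Rightarrow> nat \<Rightarrow> (nat \<Rightarrow> complex mat) \<Rightarrow> (nat \<Rightarrow> real) \<Rightarrow> complex mat" where
  "mix n m rho p = mat m m (\<lambda>(i,j). \<Sum>x<n. complex_of_real (p x) * rho x $$ (i,j))"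

definition holevo :: "nat \<Rightarrow> nat \<Rightarrow> (nat \<Rightarrow> complex mat) \<Rightarrow> (nat \<Rightarrow> real) \<Rightarrow> real" where
  "holevo n m rho p = vn_entropy (mix n m rho p) - (\<Sum>x<n. p x * vn_entropy (rho x))"

text \<open>f_lambda(p,p'); terms with p_x = 0 are zero. (The value -infinity for
  p_x > 0 = p'_x is not modelled; it never arises below since the BA iterates
  are strictly positive.)\<close>
definition f_lam :: "nat \<Rightarrow> nat \<Rightarrow> (nat \<Rightarrow> complex mat) \<Rightarrow> (nat \<Rightarrow> real) \<Rightarrow> real
    \<Rightarrow> (nat \<Rightarrow> real) \<Rightarrow> (nat \<Rightarrow> real) \<Rightarrow> real" where
  "f_lam n m rho s lam p p' =
     (\<Sum>x<n. if p x = 0 then 0 else p x * ln (p' x / p x))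
     + (\<Sum>x<n. if p x = 0 then 0 else
          p x * Re (mtrace (rho x * (mat_ln (rho x) - mat_ln (mix n m rho p')))))
     - lam * (\<Sum>x<n. s x * p x)"

primrec ba_iter :: "nat \<Rightarrow> nat \<Rightarrow> (nat \<Rightarrow> complex mat) \<Rightarrow> (nat \<Rightarrow> real) \<Rightarrow> real
    \<Rightarrow> nat \<Rightarrow> (nat \<Rightarrow> real)" where
  "ba_iter n m rho s lam 0 = (\<lambda>x. if x < n then 1 / real n else 0)"
| "ba_iter n m rho s lam (Suc t) =
     (let p = ba_iter n m rho s lam t;
          r = (\<lambda>x. exp (ln (p x) + Re (mtrace (rho x * mat_ln (rho x)))
                        - Re (mtrace (rho x * mat_ln (mix n m rho p))) - lam * s x))
      in (\<lambda>x. if x < n then r x / (\<Sum>y<n. r y) else 0))"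

end

theory Submission
  imports Defs "Jordan_Normal_Form.Spectral_Radius"
begin


lemma adj_carrier[simp]: "A \<in> carrier_mat r c \<Longrightarrow> mat_adjoint A \<in> carrier_mat c r"
  unfolding mat_adjoint_def by auto

lemma adj_dims[simp]: "dim_row (mat_adjoint A) = dim_col A" "dim_col (mat_adjoint A) = dim_row A"
  unfolding mat_adjoint_def by auto

lemma adj_index[simp]: "i < dim_col A \<Longrightarrow> j < dim_row A \<Longrightarrow> mat_adjoint A $$ (i,j) = cnj (A $$ (j,i))"
  unfolding mat_adjoint_def by (simp add: mat_of_rows_index)

lemma adj_adj[simp]: "mat_adjoint (mat_adjoint (A::complex mat)) = A"
  by (rule eq_matI) auto

lemma mult_idx: "A \<in> carrier_mat r k \<Longrightarrow> B \<in> carrier_mat k c \<Longrightarrow> i < r \<Longrightarrow> j < c \<Longrightarrow>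
   (A * B) $$ (i,j) = (\<Sum>l<k. A $$ (i,l) * B $$ (l,j))"
  by (auto simp: scalar_prod_def lessThan_atLeast0 intro!: sum.cong)

lemma mult_vec_idx: "A \<in> carrier_mat r k \<Longrightarrow> v \<in> carrier_vec k \<Longrightarrow> i < r \<Longrightarrow>
   (A *\<^sub>v v) $ i = (\<Sum>l<k. A $$ (i,l) * v $ l)"
  by (auto simp: scalar_prod_def lessThan_atLeast0 intro!: sum.cong)

lemma adj_mult: assumes A: "(A::complex mat) \<in> carrier_mat r k" and B: "B \<in> carrier_mat k c"
  shows "mat_adjoint (A * B) = mat_adjoint B * mat_adjoint A"
proof (rule eq_matI)
  fix i j assume "i < dim_row (mat_adjoint B * mat_adjoint A)" "j < dim_col (mat_adjoint B * mat_adjoint A)"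
  hence ij: "i < c" "j < r" using A B by auto
  have "mat_adjoint (A*B) $$ (i,j) = cnj ((A*B) $$ (j,i))" using A B ij by simp
  also have "\<dots> = cnj (\<Sum>l<k. A $$ (j,l) * B $$ (l,i))" by (simp add: mult_idx[OF A B ij(2) ij(1)])
  also have "\<dots> = (\<Sum>l<k. cnj (B $$ (l,i)) * cnj (A $$ (j,l)))" by (simp add: cnj_sum mult.commute)
  also have "\<dots> = (mat_adjoint B * mat_adjoint A) $$ (i,j)"
    by (subst mult_idx[of _ c k _ r]) (use A B ij in auto)
  finally show "mat_adjoint (A*B) $$ (i,j) = (mat_adjoint B * mat_adjoint A) $$ (i,j)" .
qed (use A B in auto)

lemma udu_idx: "U \<in> carrier_mat r k \<Longrightarrow> i < r \<Longrightarrow> j < r \<Longrightarrow>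
   (U * mat_diag k d * mat_adjoint U) $$ (i,j) = (\<Sum>l<k. U $$ (i,l) * d l * cnj (U $$ (j,l)))"
  apply (subst mult_idx[of _ r k _ r]; simp?)
  apply (rule sum.cong, simp)
  apply (subst mat_diag_mult_right[of _ r k], simp)
  apply (simp add: mat_diag_def)
  done




lemma orthonormal_unitary:
  assumes W: "(W::complex mat) \<in> carrier_mat n n"
    and o: "\<And>i j. i < n \<Longrightarrow> j < n \<Longrightarrow> (\<Sum>k<n. cnj (W $$ (k,i)) * W $$ (k,j)) = (if i = j then 1 else 0)"
  shows "mat_adjoint W * W = 1\<^sub>m n"
proof (rule eq_matI)
  fix i j assume "i < dim_row (1\<^sub>m n)" "j < dim_col (1\<^sub>m n)"
  hence ij: "i < n" "j < n" by auto
  show "(mat_adjoint W * W) $$ (i,j) = 1\<^sub>m n $$ (i,j)"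
    by (subst mult_idx[of _ n n _ n]) (use W ij o in auto)
qed (use W in auto)

lemma assoc_sq: "(A::complex mat) \<in> carrier_mat n n \<Longrightarrow> B \<in> carrier_mat n n \<Longrightarrow> C \<in> carrier_mat n n \<Longrightarrow>
  A * B * C = A * (B * C)"
  by (rule assoc_mult_mat[of _ n n _ n _ n])

lemma mult_sq_carrier[simp]: "(A::complex mat) \<in> carrier_mat n n \<Longrightarrow> B \<in> carrier_mat n n \<Longrightarrow> A * B \<in> carrier_mat n n"
  by auto

lemma spectral_exists:
  fixes A :: "complex mat"
  assumes "A \<in> carrier_mat n n" "mat_adjoint A = A"
  shows "\<exists>U lam. U \<in> carrier_mat n n \<and> mat_adjoint U * U = 1\<^sub>m n \<and>
           A = U * mat_diag n (\<lambda>i. complex_of_real (lam i)) * mat_adjoint U"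
  using assms
proof (induction n arbitrary: A)
  case 0
  show ?case by (rule exI[of _ "1\<^sub>m 0"], rule exI[of _ "\<lambda>_. 0"]) (use 0 in \<open>auto intro!: eq_matI\<close>)
next
  case (Suc m)
  have A: "A \<in> carrier_mat (Suc m) (Suc m)" and hA: "mat_adjoint A = A" using Suc by auto
  from spectrum_non_empty[OF A] obtain e where ev: "eigenvalue A e" unfolding spectrum_def by auto
  define v where "v = find_eigenvector A e"
  from find_eigenvector[OF A ev] have "eigenvector A v e" unfolding v_def .
  hence v: "v \<in> carrier_vec (Suc m)" "v \<noteq> 0\<^sub>v (Suc m)" "A *\<^sub>v v = e \<cdot>\<^sub>v v"
    unfolding eigenvector_def using A by auto
  interpret cof_vec_space "Suc m" "TYPE(complex)" .
  define b where "b = basis_completion v"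
  from basis_completion[OF v(1) v(2), folded b_def]
  have b: "set b \<subseteq> carrier_vec (Suc m)" "distinct b" "\<not> lin_dep (set b)" "length b = Suc m" "hd b = v"
    by auto
  define ws where "ws = gram_schmidt (Suc m) b"
  from gram_schmidt_result[OF b(1) b(2) b(3) ws_def]
  have ws: "corthogonal ws" "set ws \<subseteq> carrier_vec (Suc m)" "length ws = Suc m" by (auto simp: b(4))
  obtain vs where bv: "b = v # vs" using b(4,5) by (cases b) auto
  have hdws: "hd ws = v" unfolding ws_def bv using gram_schmidt_hd[OF v(1)] by simp
  hence ws0: "ws ! 0 = v" using ws(3) by (cases ws) auto
  have wsc: "\<And>j. j < Suc m \<Longrightarrow> ws ! j \<in> carrier_vec (Suc m)" using ws by auto
  have cprod: "\<And>i j. i < Suc m \<Longrightarrow> j < Suc m \<Longrightarrow>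
      ws ! j \<bullet>c ws ! i = (\<Sum>k<Suc m. ws ! j $ k * cnj (ws ! i $ k))"
  proof -
    fix i j assume "i < Suc m" "j < Suc m"
    hence "dim_vec (ws ! i) = Suc m" using wsc by auto
    thus "ws ! j \<bullet>c ws ! i = (\<Sum>k<Suc m. ws ! j $ k * cnj (ws ! i $ k))"
      by (simp add: scalar_prod_def lessThan_atLeast0)
  qed
  have orth: "\<And>i j. i < Suc m \<Longrightarrow> j < Suc m \<Longrightarrow> (ws ! j \<bullet>c ws ! i = 0) = (j \<noteq> i)"
    using ws by (auto simp: corthogonal_def)
  define r where "r j = Re (ws ! j \<bullet>c ws ! j)" for j
  have rpos: "\<And>j. j < Suc m \<Longrightarrow> r j > 0 \<and> ws ! j \<bullet>c ws ! j = complex_of_real (r j)"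
  proof -
    fix j assume j: "j < Suc m"
    have ge: "ws ! j \<bullet>c ws ! j \<ge> 0" by (rule conjugate_square_ge_0_vec)
    have ne: "ws ! j \<bullet>c ws ! j \<noteq> 0" using orth[OF j j] by simp
    from ge ne show "r j > 0 \<and> ws ! j \<bullet>c ws ! j = complex_of_real (r j)"
      unfolding r_def by (auto simp: less_eq_complex_def complex_eq_iff)
  qed
  define nr where "nr j = 1 / sqrt (r j)" for j
  define W where "W = mat (Suc m) (Suc m) (\<lambda>(i,j). complex_of_real (nr j) * ws ! j $ i)"
  have W: "W \<in> carrier_mat (Suc m) (Suc m)" unfolding W_def by auto
  have WW: "mat_adjoint W * W = 1\<^sub>m (Suc m)"
  proof (rule orthonormal_unitary[OF W])
    fix i j assume ij: "i < Suc m" "j < Suc m"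
    have "(\<Sum>k<Suc m. cnj (W $$ (k,i)) * W $$ (k,j))
        = complex_of_real (nr i * nr j) * (ws ! j \<bullet>c ws ! i)"
      unfolding cprod[OF ij] W_def using ij
      by (simp add: sum_distrib_left algebra_simps)
    also have "\<dots> = (if i = j then 1 else 0)"
    proof (cases "i = j")
      case True
      with rpos[OF ij(1)] show ?thesis unfolding nr_def
        by (simp add: of_real_mult[symmetric] del: of_real_mult)
    next
      case False with orth[OF ij] show ?thesis by simp
    qed
    finally show "(\<Sum>k<Suc m. cnj (W $$ (k,i)) * W $$ (k,j)) = (if i = j then 1 else 0)" .
  qed
  have WW': "W * mat_adjoint W = 1\<^sub>m (Suc m)"
    by (rule mat_mult_left_right_inverse[OF _ W WW]) (use W in auto)
  have AW0: "\<And>l. l < Suc m \<Longrightarrow> (A * W) $$ (l,0) = e * W $$ (l,0)"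
  proof -
    fix l assume l: "l < Suc m"
    have "(A * W) $$ (l,0) = (\<Sum>k<Suc m. A $$ (l,k) * W $$ (k,0))"
      by (rule mult_idx[OF A W l]) simp
    also have "\<dots> = complex_of_real (nr 0) * (\<Sum>k<Suc m. A $$ (l,k) * v $ k)"
      unfolding W_def by (simp add: sum_distrib_left algebra_simps ws0)
    also have "(\<Sum>k<Suc m. A $$ (l,k) * v $ k) = (A *\<^sub>v v) $ l"
      by (rule mult_vec_idx[OF A v(1) l, symmetric])
    also have "\<dots> = e * v $ l" using v l by simp
    finally show "(A * W) $$ (l,0) = e * W $$ (l,0)" unfolding W_def using l by (simp add: ws0)
  qed
  define A' where "A' = mat_adjoint W * A * W"
  have A': "A' \<in> carrier_mat (Suc m) (Suc m)" unfolding A'_def using A W by auto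
  have A'0: "\<And>i. i < Suc m \<Longrightarrow> A' $$ (i,0) = (if i = 0 then e else 0)"
  proof -
    fix i assume i: "i < Suc m"
    have "A' = mat_adjoint W * (A * W)" unfolding A'_def by (rule assoc_sq) (use A W in auto)
    hence "A' $$ (i,0) = (\<Sum>l<Suc m. mat_adjoint W $$ (i,l) * (A * W) $$ (l,0))"
      using mult_idx[of "mat_adjoint W" "Suc m" "Suc m" "A * W" "Suc m" i 0] A W i by auto
    also have "\<dots> = e * (\<Sum>l<Suc m. cnj (W $$ (l,i)) * W $$ (l,0))"
      using W i AW0 by (auto simp: sum_distrib_left algebra_simps intro!: sum.cong)
    also have "(\<Sum>l<Suc m. cnj (W $$ (l,i)) * W $$ (l,0)) = (mat_adjoint W * W) $$ (i,0)"
      using mult_idx[of "mat_adjoint W" "Suc m" "Suc m" "W" "Suc m" i 0] W i by auto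
    finally show "A' $$ (i,0) = (if i = 0 then e else 0)" using WW i by simp
  qed
  have hA': "mat_adjoint A' = A'"
  proof -
    have "mat_adjoint A' = mat_adjoint W * mat_adjoint (mat_adjoint W * A)"
      unfolding A'_def by (rule adj_mult[of _ "Suc m" "Suc m"]) (use A W in auto)
    also have "mat_adjoint (mat_adjoint W * A) = mat_adjoint A * W"
      by (subst adj_mult[of _ "Suc m" "Suc m" _ "Suc m"]) (use A W in auto)
    finally show ?thesis unfolding A'_def hA using assoc_sq[of "mat_adjoint W" "Suc m" A W] A W by simp
  qed
  have A'h: "\<And>i j. i < Suc m \<Longrightarrow> j < Suc m \<Longrightarrow> A' $$ (i,j) = cnj (A' $$ (j,i))"
  proof -
    fix i j assume "i < Suc m" "j < Suc m"
    hence "mat_adjoint A' $$ (i,j) = cnj (A' $$ (j,i))" using A' by simp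
    thus "A' $$ (i,j) = cnj (A' $$ (j,i))" using hA' by simp
  qed
  have ereal: "e = complex_of_real (Re e)"
    using A'h[of 0 0] A'0[of 0] by (auto simp: complex_eq_iff)
  have A'0r: "\<And>j. j < Suc m \<Longrightarrow> A' $$ (0,j) = (if j = 0 then e else 0)"
  proof -
    fix j assume j: "j < Suc m"
    have "A' $$ (0,j) = cnj (A' $$ (j,0))" using A'h[of 0 j] j by simp
    moreover have "cnj e = e" using ereal by (metis complex_cnj_complex_of_real)
    ultimately show "A' $$ (0,j) = (if j = 0 then e else 0)" using A'0[OF j]
      by (cases "j = 0") auto
  qed
  define A3 where "A3 = mat m m (\<lambda>(i,j). A' $$ (Suc i, Suc j))"
  have A3: "A3 \<in> carrier_mat m m" unfolding A3_def by auto
  have hA3: "mat_adjoint A3 = A3"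
  proof (rule eq_matI)
    fix i j assume "i < dim_row A3" "j < dim_col A3"
    hence ij: "i < m" "j < m" using A3 by auto
    have "mat_adjoint A3 $$ (i,j) = cnj (A' $$ (Suc j, Suc i))" using ij A3 by (simp add: A3_def)
    also have "\<dots> = A' $$ (Suc i, Suc j)" using A'h[of "Suc i" "Suc j"] ij by simp
    finally show "mat_adjoint A3 $$ (i,j) = A3 $$ (i,j)" using ij by (simp add: A3_def)
  qed (use A3 in auto)
  from Suc.IH[OF A3 hA3] obtain U3 lam3 where U3: "U3 \<in> carrier_mat m m"
    "mat_adjoint U3 * U3 = 1\<^sub>m m" "A3 = U3 * mat_diag m (\<lambda>i. complex_of_real (lam3 i)) * mat_adjoint U3"
    by blast
  define B where "B = mat (Suc m) (Suc m) (\<lambda>(i,j). if i = 0 then (if j = 0 then 1 else 0)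
       else if j = 0 then 0 else U3 $$ (i - 1, j - 1))"
  define lam where "lam i = (if i = 0 then Re e else lam3 (i - 1))" for i
  have B: "B \<in> carrier_mat (Suc m) (Suc m)" unfolding B_def by auto
  have BB: "mat_adjoint B * B = 1\<^sub>m (Suc m)"
  proof (rule orthonormal_unitary[OF B])
    fix i j assume ij: "i < Suc m" "j < Suc m"
    have s: "(\<Sum>k<Suc m. cnj (B $$ (k,i)) * B $$ (k,j)) =
       cnj (B $$ (0,i)) * B $$ (0,j) + (\<Sum>k<m. cnj (B $$ (Suc k,i)) * B $$ (Suc k,j))"
      by (rule sum.lessThan_Suc_shift)
    show "(\<Sum>k<Suc m. cnj (B $$ (k,i)) * B $$ (k,j)) = (if i = j then 1 else 0)"
    proof (cases i)
      case 0 thus ?thesis unfolding s using ij by (simp add: B_def)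
    next
      case (Suc i')
      show ?thesis
      proof (cases j)
        case 0 thus ?thesis unfolding s using ij by (simp add: B_def)
      next
        case (Suc j')
        have "(\<Sum>k<m. cnj (B $$ (Suc k,i)) * B $$ (Suc k,j)) = (mat_adjoint U3 * U3) $$ (i',j')"
          using mult_idx[of "mat_adjoint U3" m m U3 m i' j'] U3 ij \<open>i = Suc i'\<close> Suc
          by (simp add: B_def)
        thus ?thesis unfolding s using ij \<open>i = Suc i'\<close> Suc U3(2) by (simp add: B_def)
      qed
    qed
  qed
  have BDB: "A' = B * mat_diag (Suc m) (\<lambda>i. complex_of_real (lam i)) * mat_adjoint B"
  proof (rule eq_matI)
    fix i j assume "i < dim_row (B * mat_diag (Suc m) (\<lambda>i. complex_of_real (lam i)) * mat_adjoint B)"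
      "j < dim_col (B * mat_diag (Suc m) (\<lambda>i. complex_of_real (lam i)) * mat_adjoint B)"
    hence ij: "i < Suc m" "j < Suc m" using B by auto
    have s: "(B * mat_diag (Suc m) (\<lambda>i. complex_of_real (lam i)) * mat_adjoint B) $$ (i,j) =
       B $$ (i,0) * complex_of_real (lam 0) * cnj (B $$ (j,0)) +
       (\<Sum>k<m. B $$ (i, Suc k) * complex_of_real (lam (Suc k)) * cnj (B $$ (j, Suc k)))"
      unfolding udu_idx[OF B ij] by (rule sum.lessThan_Suc_shift)
    show "A' $$ (i,j) = (B * mat_diag (Suc m) (\<lambda>i. complex_of_real (lam i)) * mat_adjoint B) $$ (i,j)"
    proof (cases i)
      case 0 thus ?thesis unfolding s using ij A'0r ereal by (auto simp: B_def lam_def)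
    next
      case (Suc i')
      show ?thesis
      proof (cases j)
        case 0 thus ?thesis unfolding s using ij A'0 \<open>i = Suc i'\<close> by (simp add: B_def lam_def)
      next
        case (Suc j')
        have "(\<Sum>k<m. B $$ (i, Suc k) * complex_of_real (lam (Suc k)) * cnj (B $$ (j, Suc k)))
           = (U3 * mat_diag m (\<lambda>i. complex_of_real (lam3 i)) * mat_adjoint U3) $$ (i',j')"
          unfolding udu_idx[OF U3(1)] using ij \<open>i = Suc i'\<close> Suc
          by (subst udu_idx[OF U3(1)]) (auto simp: B_def lam_def)
        also have "\<dots> = A' $$ (i,j)" unfolding U3(3)[symmetric] A3_def using ij \<open>i = Suc i'\<close> Suc by simp
        finally show ?thesis unfolding s using ij \<open>i = Suc i'\<close> Suc by (simp add: B_def)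
      qed
    qed
  qed (use A' B in auto)
  define U where "U = W * B"
  have U: "U \<in> carrier_mat (Suc m) (Suc m)" unfolding U_def using W B by auto
  have adjU: "mat_adjoint (W * B) = mat_adjoint B * mat_adjoint W"
    by (rule adj_mult) (use W B in auto)
  have UU: "mat_adjoint U * U = 1\<^sub>m (Suc m)"
  proof -
    have "mat_adjoint U * U = mat_adjoint B * (mat_adjoint W * W) * B"
      unfolding U_def adjU using W B by (simp add: assoc_sq[where n="Suc m"])
    thus ?thesis using WW BB B by simp
  qed
  define D where "D = mat_diag (Suc m) (\<lambda>i. complex_of_real (lam i))"
  have D: "D \<in> carrier_mat (Suc m) (Suc m)" unfolding D_def by simp
  have "A = (W * mat_adjoint W) * A * (W * mat_adjoint W)" using WW' A by simp
  also have "\<dots> = W * A' * mat_adjoint W" unfolding A'_def using W A by (simp add: assoc_sq[where n="Suc m"])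
  also have "\<dots> = W * (B * D * mat_adjoint B) * mat_adjoint W" unfolding BDB D_def ..
  also have "\<dots> = U * D * mat_adjoint U" unfolding U_def adjU using W B D
    by (simp add: assoc_sq[where n="Suc m"])
  finally show ?case using U UU unfolding D_def by blast
qed




definition qf :: "complex mat \<Rightarrow> complex vec \<Rightarrow> complex" where
  "qf A v = conjugate v \<bullet> (A *\<^sub>v v)"

lemma qf_sum: "A \<in> carrier_mat m m \<Longrightarrow> v \<in> carrier_vec m \<Longrightarrow>
   qf A v = (\<Sum>k<m. \<Sum>l<m. cnj (v $ k) * A $$ (k,l) * v $ l)"
  unfolding qf_def
  by (auto simp: scalar_prod_def lessThan_atLeast0 sum_distrib_left mult.assoc intro!: sum.cong)

lemma swap3: "(\<Sum>k<m. \<Sum>l<m. \<Sum>i<m. g i k l) = (\<Sum>i<m. \<Sum>k<m. \<Sum>l<(m::nat). (g i k l :: complex))"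
proof -
  have "(\<Sum>k<m. \<Sum>l<m. \<Sum>i<m. g i k l) = (\<Sum>k<m. \<Sum>i<m. \<Sum>l<m. g i k l)"
    by (rule sum.cong[OF refl], rule sum.swap)
  also have "\<dots> = (\<Sum>i<m. \<Sum>k<m. \<Sum>l<m. g i k l)" by (rule sum.swap)
  finally show ?thesis .
qed

lemma prod_sums: "(d::complex) * (\<Sum>k<m. a k) * (\<Sum>l<m. b l) = (\<Sum>k<m. \<Sum>l<m. d * a k * b l)"
  by (simp add: sum_distrib_left sum_distrib_right mult.assoc) (rule sum.swap)

lemma QF:
  assumes U: "U \<in> carrier_mat m m" and x: "x \<in> carrier_vec m"
  shows "qf (U * mat_diag m d * mat_adjoint U) x =
    (\<Sum>i<m. d i * (cnj (\<Sum>k<m. cnj (U $$ (k,i)) * x $ k) * (\<Sum>k<m. cnj (U $$ (k,i)) * x $ k)))"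
proof -
  have M: "U * mat_diag m d * mat_adjoint U \<in> carrier_mat m m" using U by auto
  have "qf (U * mat_diag m d * mat_adjoint U) x =
     (\<Sum>k<m. \<Sum>l<m. cnj (x $ k) * (\<Sum>i<m. U $$ (k,i) * d i * cnj (U $$ (l,i))) * x $ l)"
    unfolding qf_sum[OF M x] using udu_idx[OF U] by (auto intro!: sum.cong)
  also have "\<dots> = (\<Sum>k<m. \<Sum>l<m. \<Sum>i<m. d i * (cnj (x $ k) * U $$ (k,i)) * (cnj (U $$ (l,i)) * x $ l))"
    apply (rule sum.cong[OF refl], rule sum.cong[OF refl])
    apply (simp only: sum_distrib_left sum_distrib_right)
    apply (rule sum.cong[OF refl])
    by (simp add: ac_simps)
  also have "\<dots> = (\<Sum>i<m. \<Sum>k<m. \<Sum>l<m. d i * (cnj (x $ k) * U $$ (k,i)) * (cnj (U $$ (l,i)) * x $ l))"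
    by (rule swap3)
  also have "\<dots> = (\<Sum>i<m. d i * (\<Sum>k<m. cnj (x $ k) * U $$ (k,i)) * (\<Sum>l<m. cnj (U $$ (l,i)) * x $ l))"
    by (rule sum.cong[OF refl]) (rule prod_sums[symmetric])
  also have "\<dots> = (\<Sum>i<m. d i * (cnj (\<Sum>k<m. cnj (U $$ (k,i)) * x $ k) * (\<Sum>k<m. cnj (U $$ (k,i)) * x $ k)))"
    by (rule sum.cong[OF refl]) (simp add: cnj_sum ac_simps)
  finally show ?thesis .
qed

lemma TRQ:
  assumes A: "A \<in> carrier_mat m m" and V: "V \<in> carrier_mat m m"
  shows "mtrace (A * (V * mat_diag m d * mat_adjoint V)) = (\<Sum>j<m. d j * qf A (col V j))"
proof -
  have M: "V * mat_diag m d * mat_adjoint V \<in> carrier_mat m m" using V by auto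
  have "mtrace (A * (V * mat_diag m d * mat_adjoint V)) =
     (\<Sum>i<m. \<Sum>k<m. A $$ (i,k) * (\<Sum>j<m. V $$ (k,j) * d j * cnj (V $$ (i,j))))"
    unfolding mtrace_def using A M udu_idx[OF V] by (auto simp: mult_idx[OF A M] intro!: sum.cong)
  also have "\<dots> = (\<Sum>i<m. \<Sum>k<m. \<Sum>j<m. d j * (cnj (V $$ (i,j)) * A $$ (i,k) * V $$ (k,j)))"
    apply (rule sum.cong[OF refl], rule sum.cong[OF refl])
    apply (simp only: sum_distrib_left)
    apply (rule sum.cong[OF refl])
    by (simp add: ac_simps)
  also have "\<dots> = (\<Sum>j<m. \<Sum>i<m. \<Sum>k<m. d j * (cnj (V $$ (i,j)) * A $$ (i,k) * V $$ (k,j)))"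
    by (rule swap3)
  also have "\<dots> = (\<Sum>j<m. d j * qf A (col V j))"
    using A V by (auto simp: qf_sum sum_distrib_left intro!: sum.cong)
  finally show ?thesis .
qed

lemma log_ineq: "0 < (a::real) \<Longrightarrow> 0 < b \<Longrightarrow> a - b \<le> a * (ln a - ln b)"
proof -
  assume a: "0 < a" and b: "0 < b"
  have "ln (b / a) \<le> b / a - 1" by (rule ln_le_minus_one) (use a b in simp)
  hence "ln b - ln a \<le> b / a - 1" using a b by (simp add: ln_div)
  hence "a * (ln b - ln a) \<le> a * (b / a - 1)" using a by (simp add: mult_left_mono)
  thus ?thesis using a by (simp add: algebra_simps)
qed

lemma real_klein:
  fixes a b :: "nat \<Rightarrow> real" and P :: "nat \<Rightarrow> nat \<Rightarrow> real"
  assumes P0: "\<And>i j. i < m \<Longrightarrow> j < m \<Longrightarrow> 0 \<le> P i j"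
    and row: "\<And>i. i < m \<Longrightarrow> (\<Sum>j<m. P i j) = 1"
    and col: "\<And>j. j < m \<Longrightarrow> (\<Sum>i<m. P i j) = 1"
    and a0: "\<And>i. i < m \<Longrightarrow> 0 \<le> a i" and b0: "\<And>j. j < m \<Longrightarrow> 0 \<le> b j"
    and tr: "(\<Sum>i<m. a i) = (\<Sum>j<m. b j)"
    and supp: "\<And>j. j < m \<Longrightarrow> b j = 0 \<Longrightarrow> (\<Sum>i<m. a i * P i j) = 0"
  shows "(\<Sum>j<m. (if 0 < b j then ln (b j) else 0) * (\<Sum>i<m. a i * P i j))
       \<le> (\<Sum>j<m. (if 0 < a j then ln (a j) else 0) * a j)"
proof -
  define la where "la i = (if 0 < a i then ln (a i) else 0)" for i
  define lb where "lb j = (if 0 < b j then ln (b j) else 0)" for j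
  have trm: "P i j * (a i - b j) \<le> P i j * a i * (la i - lb j)" if ij: "i < m" "j < m" for i j
  proof (cases "a i = 0")
    case True
    thus ?thesis using P0[OF ij] b0[OF ij(2)] by (simp add: la_def)
  next
    case False
    hence ai: "0 < a i" using a0[OF ij(1)] by simp
    show ?thesis
    proof (cases "b j = 0")
      case True
      have "\<forall>i\<in>{..<m}. a i * P i j = 0"
        using supp[OF ij(2) True] sum_nonneg_eq_0_iff[of "{..<m}" "\<lambda>i. a i * P i j"] a0 P0 ij
        by auto
      hence "a i * P i j = 0" using ij by auto
      hence "P i j = 0" using ai by simp
      thus ?thesis by simp
    next
      case False
      hence bj: "0 < b j" using b0[OF ij(2)] by simp
      have "a i - b j \<le> a i * (la i - lb j)" using log_ineq[OF ai bj] ai bj by (simp add: la_def lb_def)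
      hence "P i j * (a i - b j) \<le> P i j * (a i * (la i - lb j))"
        by (rule mult_left_mono) (use P0[OF ij] in simp)
      thus ?thesis by (simp add: mult.assoc)
    qed
  qed
  have e1: "(\<Sum>i<m. \<Sum>j<m. P i j * (a i - b j)) = (\<Sum>i<m. \<Sum>j<m. P i j * a i) - (\<Sum>i<m. \<Sum>j<m. P i j * b j)"
    by (simp add: right_diff_distrib sum_subtractf)
  have e2: "(\<Sum>i<m. \<Sum>j<m. P i j * a i) = (\<Sum>i<m. a i)"
    by (rule sum.cong[OF refl]) (simp add: sum_distrib_right[symmetric] row)
  have e3: "(\<Sum>i<m. \<Sum>j<m. P i j * b j) = (\<Sum>j<m. b j)"
    by (subst sum.swap) (rule sum.cong[OF refl], simp add: sum_distrib_right[symmetric] col)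
  have "0 = (\<Sum>i<m. \<Sum>j<m. P i j * (a i - b j))" using e1 e2 e3 tr by simp
  also have "\<dots> \<le> (\<Sum>i<m. \<Sum>j<m. P i j * a i * (la i - lb j))"
    by (intro sum_mono) (simp add: trm)
  also have "\<dots> = (\<Sum>i<m. \<Sum>j<m. P i j * a i * la i) - (\<Sum>i<m. \<Sum>j<m. P i j * a i * lb j)"
    by (simp add: right_diff_distrib sum_subtractf)
  also have "(\<Sum>i<m. \<Sum>j<m. P i j * a i * la i) = (\<Sum>i<m. la i * a i)"
  proof (rule sum.cong[OF refl])
    fix i assume "i \<in> {..<m}"
    hence "(\<Sum>j<m. P i j) = 1" using row by simp
    hence "(\<Sum>j<m. P i j) * (a i * la i) = la i * a i" by simp
    thus "(\<Sum>j<m. P i j * a i * la i) = la i * a i" by (simp add: sum_distrib_right mult.assoc)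
  qed
  also have "(\<Sum>i<m. \<Sum>j<m. P i j * a i * lb j) = (\<Sum>j<m. lb j * (\<Sum>i<m. a i * P i j))"
    by (subst sum.swap) (rule sum.cong[OF refl], simp add: sum_distrib_left mult.commute mult.left_commute)
  finally show ?thesis unfolding la_def lb_def by simp
qed


lemma cnsq: "(complex_of_real (cmod z))\<^sup>2 = z * cnj z"
  using complex_norm_square[of z] by simp

lemma klein:
  assumes A: "A \<in> carrier_mat m m" and U: "U \<in> carrier_mat m m" "mat_adjoint U * U = 1\<^sub>m m"
    and V: "V \<in> carrier_mat m m" "mat_adjoint V * V = 1\<^sub>m m"
    and Ad: "A = U * mat_diag m (\<lambda>i. complex_of_real (a i)) * mat_adjoint U"
    and a0: "\<And>i. i < m \<Longrightarrow> 0 \<le> a i" and b0: "\<And>j. j < m \<Longrightarrow> 0 \<le> b j"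
    and tr: "(\<Sum>i<m. a i) = (\<Sum>j<m. b j)"
    and supp: "\<And>j. j < m \<Longrightarrow> b j = 0 \<Longrightarrow> qf A (col V j) = 0"
  shows "Re (mtrace (A * (V * mat_diag m (\<lambda>i. complex_of_real (if 0 < b i then ln (b i) else 0)) * mat_adjoint V)))
         \<le> Re (mtrace (A * (U * mat_diag m (\<lambda>i. complex_of_real (if 0 < a i then ln (a i) else 0)) * mat_adjoint U)))"
proof -
  define X where "X = mat_adjoint U * V"
  have X: "X \<in> carrier_mat m m" unfolding X_def using U V by auto
  have Xidx: "X $$ (i,j) = (\<Sum>k<m. cnj (U $$ (k,i)) * col V j $ k)" if "i < m" "j < m" for i j
    unfolding X_def using that U V by (subst mult_idx[of _ m m _ m]) auto
  define P where "P i j = (cmod (X $$ (i,j)))\<^sup>2" for i j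
  have qfV: "qf A (col V j) = complex_of_real (\<Sum>i<m. a i * P i j)" if j: "j < m" for j
  proof -
    have "qf A (col V j) = (\<Sum>i<m. complex_of_real (a i) * (cnj (X $$ (i,j)) * X $$ (i,j)))"
      unfolding Ad using QF[OF U(1), of "col V j"] V j Xidx by simp
    also have "\<dots> = (\<Sum>i<m. complex_of_real (a i * P i j))"
      unfolding P_def by (rule sum.cong[OF refl]) (simp add: cnsq mult.commute)
    finally show ?thesis by simp
  qed
  have qfU: "qf A (col U j) = complex_of_real (a j)" if j: "j < m" for j
  proof -
    have uij: "(\<Sum>k<m. cnj (U $$ (k,i)) * col U j $ k) = (if i = j then 1 else 0)" if i: "i < m" for i
    proof -
      have "(mat_adjoint U * U) $$ (i,j) = (\<Sum>k<m. cnj (U $$ (k,i)) * col U j $ k)"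
        using i j U by (subst mult_idx[of _ m m _ m]) auto
      thus ?thesis using U(2) i j by simp
    qed
    have "qf A (col U j) = (\<Sum>i<m. complex_of_real (a i) * (cnj (\<Sum>k<m. cnj (U $$ (k,i)) * col U j $ k) * (\<Sum>k<m. cnj (U $$ (k,i)) * col U j $ k)))"
      unfolding Ad by (rule QF[OF U(1)]) (use U j in auto)
    also have "\<dots> = (\<Sum>i<m. if i = j then complex_of_real (a j) else 0)"
      using uij by (intro sum.cong) auto
    finally show ?thesis using j by simp
  qed
  have VV': "V * mat_adjoint V = 1\<^sub>m m"
    by (rule mat_mult_left_right_inverse[OF _ V(1) V(2)]) (use V in auto)
  have UU': "U * mat_adjoint U = 1\<^sub>m m"
    by (rule mat_mult_left_right_inverse[OF _ U(1) U(2)]) (use U in auto)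
  have adjX: "mat_adjoint X = mat_adjoint V * U" unfolding X_def using U V by (simp add: adj_mult[of _ m m _ m])
  have XX': "X * mat_adjoint X = 1\<^sub>m m"
  proof -
    have "X * mat_adjoint X = mat_adjoint U * (V * mat_adjoint V) * U"
      unfolding adjX unfolding X_def using U V by (simp add: assoc_sq[where n=m])
    thus ?thesis using VV' U by simp
  qed
  have X'X: "mat_adjoint X * X = 1\<^sub>m m"
  proof -
    have "mat_adjoint X * X = mat_adjoint V * (U * mat_adjoint U) * V"
      unfolding adjX unfolding X_def using U V by (simp add: assoc_sq[where n=m])
    thus ?thesis using UU' V by simp
  qed
  have row: "(\<Sum>j<m. P i j) = 1" if i: "i < m" for i
  proof -
    have "(X * mat_adjoint X) $$ (i,i) = (\<Sum>j<m. X $$ (i,j) * cnj (X $$ (i,j)))"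
      using i X by (subst mult_idx[of _ m m _ m]) auto
    also have "\<dots> = complex_of_real (\<Sum>j<m. P i j)"
      unfolding P_def by (simp add: cnsq)
    finally show ?thesis using XX' i by (simp add: complex_eq_iff)
  qed
  have col: "(\<Sum>i<m. P i j) = 1" if j: "j < m" for j
  proof -
    have "(mat_adjoint X * X) $$ (j,j) = (\<Sum>i<m. cnj (X $$ (i,j)) * X $$ (i,j))"
      using j X by (subst mult_idx[of _ m m _ m]) auto
    also have "\<dots> = complex_of_real (\<Sum>i<m. P i j)"
      unfolding P_def by (simp add: cnsq mult.commute)
    finally show ?thesis using X'X j by (simp add: complex_eq_iff)
  qed
  have trB: "Re (mtrace (A * (V * mat_diag m (\<lambda>i. complex_of_real (if 0 < b i then ln (b i) else 0)) * mat_adjoint V)))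
     = (\<Sum>j<m. (if 0 < b j then ln (b j) else 0) * (\<Sum>i<m. a i * P i j))"
    unfolding TRQ[OF A V(1)] using qfV by (simp add: Re_sum)
  have trA: "Re (mtrace (A * (U * mat_diag m (\<lambda>i. complex_of_real (if 0 < a i then ln (a i) else 0)) * mat_adjoint U)))
     = (\<Sum>j<m. (if 0 < a j then ln (a j) else 0) * a j)"
    unfolding TRQ[OF A U(1)] using qfU by (simp add: Re_sum)
  have supp': "(\<Sum>i<m. a i * P i j) = 0" if "j < m" "b j = 0" for j
  proof -
    have "complex_of_real (\<Sum>i<m. a i * P i j) = 0" using supp[OF that] qfV[OF that(1)] by simp
    thus ?thesis by (simp only: of_real_eq_0_iff)
  qed
  show ?thesis unfolding trA trB
    by (rule real_klein[OF _ row col a0 b0 tr supp']) (simp add: P_def)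
qed




lemma mat_ln_spec:
  assumes A: "A \<in> carrier_mat m m" and h: "mat_adjoint A = A"
  obtains U lam where "spectral_decomp A U lam" "U \<in> carrier_mat m m" "mat_adjoint U * U = 1\<^sub>m m"
    "A = U * mat_diag m (\<lambda>i. complex_of_real (lam i)) * mat_adjoint U"
    "mat_ln A = U * mat_diag m (\<lambda>i. complex_of_real (if 0 < lam i then ln (lam i) else 0)) * mat_adjoint U"
proof -
  from spectral_exists[OF A h] obtain U0 lam0 where U0: "U0 \<in> carrier_mat m m" "mat_adjoint U0 * U0 = 1\<^sub>m m"
    "A = U0 * mat_diag m (\<lambda>i. complex_of_real (lam0 i)) * mat_adjoint U0" by blast
  have "spectral_decomp A U0 lam0" unfolding spectral_decomp_def unitary_mat_def using U0 A by auto
  hence ex: "\<exists>x. (\<lambda>(U, lam). spectral_decomp A U lam) x" by auto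
  define S where "S = (SOME (U, lam). spectral_decomp A U lam)"
  obtain U lam where S: "S = (U, lam)" by (cases S) auto
  have sd: "spectral_decomp A U lam" using someI_ex[OF ex] unfolding S_def[symmetric] S by simp
  hence U: "U \<in> carrier_mat m m" "mat_adjoint U * U = 1\<^sub>m m"
    "A = U * mat_diag m (\<lambda>i. complex_of_real (lam i)) * mat_adjoint U"
    using A unfolding spectral_decomp_def unitary_mat_def by auto
  have "mat_ln A = U * mat_diag m (\<lambda>i. complex_of_real (if 0 < lam i then ln (lam i) else 0)) * mat_adjoint U"
    unfolding mat_ln_def S_def[symmetric] S using A by simp
  with that sd U show ?thesis by blast
qed

lemma eig_qf:
  assumes U: "U \<in> carrier_mat m m" "mat_adjoint U * U = 1\<^sub>m m" and j: "j < m"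
  shows "qf (U * mat_diag m (\<lambda>i. complex_of_real (a i)) * mat_adjoint U) (col U j) = complex_of_real (a j)"
proof -
  have uij: "(\<Sum>k<m. cnj (U $$ (k,i)) * col U j $ k) = (if i = j then 1 else 0)" if i: "i < m" for i
  proof -
    have "(mat_adjoint U * U) $$ (i,j) = (\<Sum>k<m. cnj (U $$ (k,i)) * col U j $ k)"
      using i j U by (subst mult_idx[of _ m m _ m]) auto
    thus ?thesis using U(2) i j by simp
  qed
  have "qf (U * mat_diag m (\<lambda>i. complex_of_real (a i)) * mat_adjoint U) (col U j) = (\<Sum>i<m. complex_of_real (a i) * (cnj (\<Sum>k<m. cnj (U $$ (k,i)) * col U j $ k) * (\<Sum>k<m. cnj (U $$ (k,i)) * col U j $ k)))"
    by (rule QF[OF U(1)]) (use U j in auto)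
  also have "\<dots> = (\<Sum>i<m. if i = j then complex_of_real (a j) else 0)"
    using uij by (intro sum.cong) auto
  finally show ?thesis using j by simp
qed

lemma trace_eig:
  assumes U: "U \<in> carrier_mat m m" "mat_adjoint U * U = 1\<^sub>m m"
    and Ad: "A = U * mat_diag m (\<lambda>i. complex_of_real (a i)) * mat_adjoint U"
  shows "mtrace A = complex_of_real (\<Sum>i<m. a i)"
proof -
  have A: "A \<in> carrier_mat m m" using U Ad by auto
  have UU': "U * mat_adjoint U = 1\<^sub>m m"
    by (rule mat_mult_left_right_inverse[OF _ U(1) U(2)]) (use U in auto)
  have "U * mat_diag m (\<lambda>i. 1) * mat_adjoint U = 1\<^sub>m m" using UU' U by simp
  hence "mtrace A = mtrace (A * (U * mat_diag m (\<lambda>i. 1) * mat_adjoint U))" using A by simp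
  also have "\<dots> = (\<Sum>j<m. 1 * qf A (col U j))" by (rule TRQ[OF A U(1)])
  also have "\<dots> = (\<Sum>j<m. complex_of_real (a j))" using eig_qf[OF U] Ad by simp
  finally show ?thesis by simp
qed

lemma mix_carrier[simp]: "mix n m rho p \<in> carrier_mat m m"
  unfolding mix_def by auto

lemma mix_dims[simp]: "dim_row (mix n m rho p) = m" "dim_col (mix n m rho p) = m"
  unfolding mix_def by auto

lemma mix_idx: "i < m \<Longrightarrow> j < m \<Longrightarrow> mix n m rho p $$ (i,j) = (\<Sum>x<n. complex_of_real (p x) * rho x $$ (i,j))"
  unfolding mix_def by simp

lemma mix_qf:
  assumes v: "v \<in> carrier_vec m" and rho: "\<And>x. x < n \<Longrightarrow> rho x \<in> carrier_mat m m"
  shows "qf (mix n m rho p) v = (\<Sum>x<n. complex_of_real (p x) * qf (rho x) v)"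
proof -
  have "qf (mix n m rho p) v = (\<Sum>k<m. \<Sum>l<m. \<Sum>x<n. complex_of_real (p x) * (cnj (v $ k) * rho x $$ (k,l) * v $ l))"
    unfolding qf_sum[OF mix_carrier v]
    by (intro sum.cong refl) (simp add: mix_idx sum_distrib_left sum_distrib_right ac_simps)
  also have "\<dots> = (\<Sum>x<n. \<Sum>k<m. \<Sum>l<m. complex_of_real (p x) * (cnj (v $ k) * rho x $$ (k,l) * v $ l))"
  proof -
    have "(\<Sum>k<m. \<Sum>l<m. \<Sum>x<n. complex_of_real (p x) * (cnj (v $ k) * rho x $$ (k,l) * v $ l))
       = (\<Sum>k<m. \<Sum>x<n. \<Sum>l<m. complex_of_real (p x) * (cnj (v $ k) * rho x $$ (k,l) * v $ l))"
      by (rule sum.cong[OF refl], rule sum.swap)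
    also have "\<dots> = (\<Sum>x<n. \<Sum>k<m. \<Sum>l<m. complex_of_real (p x) * (cnj (v $ k) * rho x $$ (k,l) * v $ l))"
      by (rule sum.swap)
    finally show ?thesis .
  qed
  also have "\<dots> = (\<Sum>x<n. complex_of_real (p x) * qf (rho x) v)"
  proof (rule sum.cong[OF refl])
    fix x assume "x \<in> {..<n}"
    thus "(\<Sum>k<m. \<Sum>l<m. complex_of_real (p x) * (cnj (v $ k) * rho x $$ (k,l) * v $ l)) = complex_of_real (p x) * qf (rho x) v"
      using qf_sum[OF rho v] by (simp add: sum_distrib_left)
  qed
  finally show ?thesis .
qed

lemma mix_herm:
  assumes rho: "\<And>x. x < n \<Longrightarrow> rho x \<in> carrier_mat m m" and h: "\<And>x. x < n \<Longrightarrow> mat_adjoint (rho x) = rho x"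
  shows "mat_adjoint (mix n m rho p) = mix n m rho p"
proof (rule eq_matI)
  fix i j assume "i < dim_row (mix n m rho p)" "j < dim_col (mix n m rho p)"
  hence ij: "i < m" "j < m" by (auto simp: mix_def)
  have e: "cnj (rho x $$ (j,i)) = rho x $$ (i,j)" if x: "x < n" for x
  proof -
    have "mat_adjoint (rho x) $$ (i,j) = cnj (rho x $$ (j,i))" using rho[OF x] ij by simp
    thus ?thesis using h[OF x] by simp
  qed
  show "mat_adjoint (mix n m rho p) $$ (i,j) = mix n m rho p $$ (i,j)"
    using ij e by (simp add: mix_idx cnj_sum)
qed (auto simp: mix_def)

lemma mix_trace_mult:
  assumes rho: "\<And>x. x < n \<Longrightarrow> rho x \<in> carrier_mat m m" and M: "M \<in> carrier_mat m m"
  shows "mtrace (mix n m rho p * M) = (\<Sum>x<n. complex_of_real (p x) * mtrace (rho x * M))"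
proof -
  have "mtrace (mix n m rho p * M) = (\<Sum>i<m. \<Sum>k<m. \<Sum>x<n. complex_of_real (p x) * (rho x $$ (i,k) * M $$ (k,i)))"
    unfolding mtrace_def
  proof (rule sum.cong, simp)
    fix i assume i: "i \<in> {..<m}"
    hence i: "i < m" by simp
    have "(mix n m rho p * M) $$ (i,i) = (\<Sum>k<m. mix n m rho p $$ (i,k) * M $$ (k,i))"
      by (rule mult_idx[OF mix_carrier M i i])
    thus "(mix n m rho p * M) $$ (i,i) = (\<Sum>k<m. \<Sum>x<n. complex_of_real (p x) * (rho x $$ (i,k) * M $$ (k,i)))"
      using i by (simp add: mix_idx sum_distrib_left ac_simps)
  qed
  also have "\<dots> = (\<Sum>x<n. \<Sum>i<m. \<Sum>k<m. complex_of_real (p x) * (rho x $$ (i,k) * M $$ (k,i)))"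
  proof -
    have "(\<Sum>i<m. \<Sum>k<m. \<Sum>x<n. complex_of_real (p x) * (rho x $$ (i,k) * M $$ (k,i)))
       = (\<Sum>i<m. \<Sum>x<n. \<Sum>k<m. complex_of_real (p x) * (rho x $$ (i,k) * M $$ (k,i)))"
      by (rule sum.cong[OF refl], rule sum.swap)
    also have "\<dots> = (\<Sum>x<n. \<Sum>i<m. \<Sum>k<m. complex_of_real (p x) * (rho x $$ (i,k) * M $$ (k,i)))"
      by (rule sum.swap)
    finally show ?thesis .
  qed
  also have "\<dots> = (\<Sum>x<n. complex_of_real (p x) * mtrace (rho x * M))"
  proof (rule sum.cong[OF refl])
    fix x assume "x \<in> {..<n}"
    hence R: "rho x \<in> carrier_mat m m" using rho by simp
    have "mtrace (rho x * M) = (\<Sum>i<m. \<Sum>k<m. rho x $$ (i,k) * M $$ (k,i))"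
      unfolding mtrace_def using R M by (intro sum.cong) (use R in \<open>auto simp: mult_idx[OF R M] simp del: index_mult_mat\<close>, simp add: carrier_matD)
    thus "(\<Sum>i<m. \<Sum>k<m. complex_of_real (p x) * (rho x $$ (i,k) * M $$ (k,i))) = complex_of_real (p x) * mtrace (rho x * M)"
      by (simp add: sum_distrib_left)
  qed
  finally show ?thesis .
qed

lemma mix_trace:
  assumes rho: "\<And>x. x < n \<Longrightarrow> rho x \<in> carrier_mat m m"
  shows "mtrace (mix n m rho p) = (\<Sum>x<n. complex_of_real (p x) * mtrace (rho x))"
proof -
  have "mtrace (mix n m rho p) = mtrace (mix n m rho p * 1\<^sub>m m)" by simp
  also have "\<dots> = (\<Sum>x<n. complex_of_real (p x) * mtrace (rho x * 1\<^sub>m m))"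
    by (rule mix_trace_mult[OF rho]) auto
  also have "\<dots> = (\<Sum>x<n. complex_of_real (p x) * mtrace (rho x))"
    using rho by (intro sum.cong refl) (metis lessThan_iff right_mult_one_mat)
  finally show ?thesis .
qed




lemma dens_facts:
  assumes "density_mat m A"
  shows "A \<in> carrier_mat m m" "mat_adjoint A = A" "mtrace A = 1"
    "\<And>v. v \<in> carrier_vec m \<Longrightarrow> qf A v = complex_of_real (Re (qf A v)) \<and> 0 \<le> Re (qf A v)"
proof -
  show A: "A \<in> carrier_mat m m" using assms unfolding density_mat_def by auto
  show "mat_adjoint A = A" "mtrace A = 1" using assms unfolding density_mat_def psd_mat_def hermitian_mat_def by auto
  fix v :: "complex vec" assume v: "v \<in> carrier_vec m"
  have "dim_row A = m" using A by auto
  hence "Im (qf A v) = 0 \<and> 0 \<le> Re (qf A v)" using assms v unfolding density_mat_def psd_mat_def qf_def by auto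
  thus "qf A v = complex_of_real (Re (qf A v)) \<and> 0 \<le> Re (qf A v)" by (auto simp: complex_eq_iff)
qed

lemma mix_qf_real:
  assumes rho: "\<forall>x<n. density_mat m (rho x)" and v: "v \<in> carrier_vec m"
  shows "qf (mix n m rho p) v = complex_of_real (\<Sum>x<n. p x * Re (qf (rho x) v))"
proof -
  have "qf (mix n m rho p) v = (\<Sum>x<n. complex_of_real (p x) * qf (rho x) v)"
    by (rule mix_qf[OF v]) (use rho dens_facts in auto)
  also have "\<dots> = (\<Sum>x<n. complex_of_real (p x * Re (qf (rho x) v)))"
  proof (rule sum.cong[OF refl])
    fix x assume "x \<in> {..<n}"
    hence "qf (rho x) v = complex_of_real (Re (qf (rho x) v))" using rho dens_facts(4) v by auto
    thus "complex_of_real (p x) * qf (rho x) v = complex_of_real (p x * Re (qf (rho x) v))"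
      by (metis of_real_mult)
  qed
  finally show ?thesis by simp
qed

lemma gibbs:
  assumes rho: "\<forall>x<n. density_mat m (rho x)" and p: "p \<in> simplex n"
    and q: "\<forall>x<n. 0 < q x" "(\<Sum>x<n. q x) = 1"
  shows "Re (mtrace (mix n m rho p * mat_ln (mix n m rho q))) \<le> Re (mtrace (mix n m rho p * mat_ln (mix n m rho p)))"
proof -
  have rc: "\<And>x. x < n \<Longrightarrow> rho x \<in> carrier_mat m m" and rh: "\<And>x. x < n \<Longrightarrow> mat_adjoint (rho x) = rho x"
    and rt: "\<And>x. x < n \<Longrightarrow> mtrace (rho x) = 1"
    using rho dens_facts by auto
  have rq: "\<And>x v. x < n \<Longrightarrow> v \<in> carrier_vec m \<Longrightarrow> 0 \<le> Re (qf (rho x) v)"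
    and rq': "\<And>x v. x < n \<Longrightarrow> v \<in> carrier_vec m \<Longrightarrow> qf (rho x) v = complex_of_real (Re (qf (rho x) v))"
    using rho dens_facts(4) by blast+
  have p0: "\<And>x. x < n \<Longrightarrow> 0 \<le> p x" and p1: "(\<Sum>x<n. p x) = 1" using p unfolding simplex_def by auto
  define A where "A = mix n m rho p"
  define B where "B = mix n m rho q"
  have A: "A \<in> carrier_mat m m" "mat_adjoint A = A" unfolding A_def using mix_herm[OF rc rh] by auto
  have B: "B \<in> carrier_mat m m" "mat_adjoint B = B" unfolding B_def using mix_herm[OF rc rh] by auto
  obtain U a where sdU: "spectral_decomp A U a" and U: "U \<in> carrier_mat m m" "mat_adjoint U * U = 1\<^sub>m m"
    "A = U * mat_diag m (\<lambda>i. complex_of_real (a i)) * mat_adjoint U"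
    "mat_ln A = U * mat_diag m (\<lambda>i. complex_of_real (if 0 < a i then ln (a i) else 0)) * mat_adjoint U"
    by (rule mat_ln_spec[OF A])
  obtain V b where sdV: "spectral_decomp B V b" and V: "V \<in> carrier_mat m m" "mat_adjoint V * V = 1\<^sub>m m"
    "B = V * mat_diag m (\<lambda>i. complex_of_real (b i)) * mat_adjoint V"
    "mat_ln B = V * mat_diag m (\<lambda>i. complex_of_real (if 0 < b i then ln (b i) else 0)) * mat_adjoint V"
    by (rule mat_ln_spec[OF B])
  have colU: "col U i \<in> carrier_vec m" for i using U by auto
  have colV: "col V i \<in> carrier_vec m" for i using V by auto
  have a_eq: "a i = (\<Sum>x<n. p x * Re (qf (rho x) (col U i)))" if "i < m" for i
  proof -
    have "complex_of_real (a i) = qf A (col U i)" using eig_qf[OF U(1,2) that, of a] U(3) by simp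
    also have "\<dots> = complex_of_real (\<Sum>x<n. p x * Re (qf (rho x) (col U i)))"
      unfolding A_def by (rule mix_qf_real[OF rho colU])
    finally show ?thesis by (simp only: of_real_eq_iff)
  qed
  have b_eq: "b i = (\<Sum>x<n. q x * Re (qf (rho x) (col V i)))" if "i < m" for i
  proof -
    have "complex_of_real (b i) = qf B (col V i)" using eig_qf[OF V(1,2) that, of b] V(3) by simp
    also have "\<dots> = complex_of_real (\<Sum>x<n. q x * Re (qf (rho x) (col V i)))"
      unfolding B_def by (rule mix_qf_real[OF rho colV])
    finally show ?thesis by (simp only: of_real_eq_iff)
  qed
  have a0: "0 \<le> a i" if "i < m" for i
    unfolding a_eq[OF that] using p0 rq colU by (intro sum_nonneg) auto
  have b0: "0 \<le> b i" if "i < m" for i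
    unfolding b_eq[OF that] using q rq colV by (intro sum_nonneg mult_nonneg_nonneg) auto
  have trA: "mtrace A = 1"
  proof -
    have "mtrace A = (\<Sum>x<n. complex_of_real (p x) * mtrace (rho x))" unfolding A_def by (rule mix_trace[OF rc])
    also have "\<dots> = complex_of_real (\<Sum>x<n. p x)" using rt by simp
    finally show ?thesis using p1 by simp
  qed
  have trB: "mtrace B = 1"
  proof -
    have "mtrace B = (\<Sum>x<n. complex_of_real (q x) * mtrace (rho x))" unfolding B_def by (rule mix_trace[OF rc])
    also have "\<dots> = complex_of_real (\<Sum>x<n. q x)" using rt by simp
    finally show ?thesis using q(2) by simp
  qed
  have tr: "(\<Sum>i<m. a i) = (\<Sum>j<m. b j)"
  proof -
    have "complex_of_real (\<Sum>i<m. a i) = complex_of_real (\<Sum>j<m. b j)"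
      using trace_eig[OF U(1,2,3)] trace_eig[OF V(1,2,3)] trA trB by simp
    thus ?thesis by (simp only: of_real_eq_iff)
  qed
  have supp: "qf A (col V j) = 0" if j: "j < m" "b j = 0" for j
  proof -
    have "(\<Sum>x<n. q x * Re (qf (rho x) (col V j))) = 0" using b_eq[OF j(1)] j(2) by simp
    hence "\<forall>x\<in>{..<n}. q x * Re (qf (rho x) (col V j)) = 0"
      by (subst sum_nonneg_eq_0_iff[symmetric]) (use q rq colV in \<open>auto intro!: mult_nonneg_nonneg\<close>)
    hence z: "\<forall>x<n. Re (qf (rho x) (col V j)) = 0" using q(1) by (metis lessThan_iff less_irrefl mult_eq_0_iff)
    show ?thesis unfolding A_def mix_qf_real[OF rho colV] using z by simp
  qed
  have "Re (mtrace (A * mat_ln B)) \<le> Re (mtrace (A * mat_ln A))"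
    unfolding U(4) V(4) by (rule klein[OF A(1) U(1,2) V(1,2) U(3) a0 b0 tr supp])
  thus ?thesis unfolding A_def B_def .
qed




lemma ba_pos:
  assumes n: "1 \<le> n"
  shows "(\<forall>x<n. 0 < ba_iter n m rho s lam t x) \<and> (\<Sum>x<n. ba_iter n m rho s lam t x) = 1"
proof (induction t)
  case 0
  show ?case using n by simp
next
  case (Suc t)
  define q where "q = ba_iter n m rho s lam t"
  define r where "r x = exp (ln (q x) + Re (mtrace (rho x * mat_ln (rho x)))
                        - Re (mtrace (rho x * mat_ln (mix n m rho q))) - lam * s x)" for x
  have eq: "ba_iter n m rho s lam (Suc t) = (\<lambda>x. if x < n then r x / (\<Sum>y<n. r y) else 0)"
    unfolding q_def r_def by (simp add: Let_def)
  have rpos: "0 < r x" for x unfolding r_def by simp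
  have Z: "0 < (\<Sum>y<n. r y)" using n rpos by (intro sum_pos) (auto simp: lessThan_empty_iff)
  show ?case unfolding eq using rpos Z by (auto simp: sum_divide_distrib[symmetric])
qed

lemma mat_ln_carrier: assumes "A \<in> carrier_mat m m" "mat_adjoint A = A" shows "mat_ln A \<in> carrier_mat m m"
proof -
  obtain U lam where "spectral_decomp A U lam" "U \<in> carrier_mat m m" "mat_adjoint U * U = 1\<^sub>m m"
    "A = U * mat_diag m (\<lambda>i. complex_of_real (lam i)) * mat_adjoint U"
    "mat_ln A = U * mat_diag m (\<lambda>i. complex_of_real (if 0 < lam i then ln (lam i) else 0)) * mat_adjoint U"
    by (rule mat_ln_spec[OF assms])
  thus ?thesis by simp
qed

lemma mtrace_minus: "X \<in> carrier_mat m m \<Longrightarrow> Y \<in> carrier_mat m m \<Longrightarrow> mtrace (X - Y) = mtrace X - mtrace Y"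
  unfolding mtrace_def by (simp add: sum_subtractf)

theorem corollary2:
  fixes n m :: nat and rho :: "nat \<Rightarrow> complex mat" and s :: "nat \<Rightarrow> real"
    and lam :: real and p :: "nat \<Rightarrow> real" and t :: nat
  assumes "1 \<le> n" and "1 \<le> m"
    and "\<forall>x<n. density_mat m (rho x)"
    and "\<forall>x<n. 0 \<le> s x"
    and "0 \<le> lam"
    and "p \<in> simplex n"
  shows "holevo n m rho p - lam * (\<Sum>x<n. s x * p x)
           - f_lam n m rho s lam (ba_iter n m rho s lam (Suc t)) (ba_iter n m rho s lam t)
         \<le> (\<Sum>x<n. p x * ln (ba_iter n m rho s lam (Suc t) x / ba_iter n m rho s lam t x))"
proof -
  note n = assms(1) and rho = assms(3) and p = assms(6)
  have rc: "\<And>x. x < n \<Longrightarrow> rho x \<in> carrier_mat m m" and rh: "\<And>x. x < n \<Longrightarrow> mat_adjoint (rho x) = rho x"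
    using rho dens_facts by auto
  have p1: "(\<Sum>x<n. p x) = 1" using p unfolding simplex_def by auto
  define q where "q = ba_iter n m rho s lam t"
  define q' where "q' = ba_iter n m rho s lam (Suc t)"
  have qa: "(\<forall>x<n. 0 < q x) \<and> (\<Sum>x<n. q x) = 1" unfolding q_def by (rule ba_pos[OF n])
  have qa': "(\<forall>x<n. 0 < q' x) \<and> (\<Sum>x<n. q' x) = 1" unfolding q'_def by (rule ba_pos[OF n])
  have q: "\<forall>x<n. 0 < q x" "(\<Sum>x<n. q x) = 1" using qa by auto
  have q': "\<forall>x<n. 0 < q' x" "(\<Sum>x<n. q' x) = 1" using qa' by auto
  define Lq where "Lq = mat_ln (mix n m rho q)"
  have Lq: "Lq \<in> carrier_mat m m"
  proof -
    have "mix n m rho q \<in> carrier_mat m m" "mat_adjoint (mix n m rho q) = mix n m rho q"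
      using mix_herm[OF rc rh] by auto
    thus ?thesis unfolding Lq_def by (rule mat_ln_carrier)
  qed
  have lnc: "mat_ln (rho x) \<in> carrier_mat m m" if x: "x < n" for x
    by (rule mat_ln_carrier[OF rc[OF x] rh[OF x]])
  define K where "K x = Re (mtrace (rho x * mat_ln (rho x)))" for x
  define L where "L x = Re (mtrace (rho x * Lq))" for x
  define g where "g x = K x - L x - lam * s x" for x
  define r where "r x = exp (ln (q x) + Re (mtrace (rho x * mat_ln (rho x)))
                        - Re (mtrace (rho x * mat_ln (mix n m rho q))) - lam * s x)" for x
  define Z where "Z = (\<Sum>y<n. r y)"
  have eq: "q' = (\<lambda>x. if x < n then r x / Z else 0)"
    unfolding q'_def r_def Z_def q_def by (simp add: Let_def)
  have rpos: "0 < r x" for x unfolding r_def by simp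
  have Z: "0 < Z" unfolding Z_def using n rpos by (intro sum_pos) (auto simp: lessThan_empty_iff)
  have r_eq: "r x = q x * exp (g x)" if x: "x < n" for x
  proof -
    have "r x = exp (ln (q x) + g x)" unfolding r_def g_def K_def L_def Lq_def by (simp add: algebra_simps)
    also have "\<dots> = q x * exp (g x)" using q(1) x by (simp add: exp_add)
    finally show ?thesis .
  qed
  have lnr: "ln (q' x / q x) = g x - ln Z" if x: "x < n" for x
  proof -
    have qx: "q x \<noteq> 0" using x q(1) by auto
    have "q' x / q x = exp (g x) / Z" using x qx unfolding eq by (simp add: r_eq)
    thus ?thesis using Z by (simp add: ln_div)
  qed
  have lnr': "ln (q x / q' x) = ln Z - g x" if x: "x < n" for x
  proof -
    have "ln (q x / q' x) = - ln (q' x / q x)" using q(1) q'(1) x by (simp add: ln_div)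
    thus ?thesis using lnr[OF x] by simp
  qed
  have KL: "Re (mtrace (rho x * (mat_ln (rho x) - mat_ln (mix n m rho q)))) = K x - L x" if x: "x < n" for x
  proof -
    have "rho x * (mat_ln (rho x) - Lq) = rho x * mat_ln (rho x) - rho x * Lq"
      by (rule mult_minus_distrib_mat[OF rc[OF x] lnc[OF x] Lq])
    moreover have "mtrace (rho x * mat_ln (rho x) - rho x * Lq) = mtrace (rho x * mat_ln (rho x)) - mtrace (rho x * Lq)"
      by (rule mtrace_minus) (use rc[OF x] lnc[OF x] Lq in auto)
    ultimately show ?thesis unfolding K_def L_def Lq_def by simp
  qed
  have f: "f_lam n m rho s lam q' q = ln Z"
  proof -
    have "f_lam n m rho s lam q' q = (\<Sum>x<n. q' x * (ln Z - g x)) + (\<Sum>x<n. q' x * (K x - L x)) - lam * (\<Sum>x<n. s x * q' x)"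
    proof -
      have s1: "(\<Sum>x<n. if q' x = 0 then 0 else q' x * ln (q x / q' x)) = (\<Sum>x<n. q' x * (ln Z - g x))"
        by (rule sum.cong[OF refl]) (use q'(1) lnr' in auto)
      have s2: "(\<Sum>x<n. if q' x = 0 then 0 else q' x * Re (mtrace (rho x * (mat_ln (rho x) - mat_ln (mix n m rho q)))))
          = (\<Sum>x<n. q' x * (K x - L x))"
        by (rule sum.cong[OF refl]) (use q'(1) KL in auto)
      show ?thesis unfolding f_lam_def s1 s2 ..
    qed
    also have "\<dots> = ln Z * (\<Sum>x<n. q' x)"
      unfolding g_def by (simp add: algebra_simps sum.distrib sum_subtractf sum_distrib_left sum_distrib_right)
    finally show ?thesis using q'(2) by simp
  qed
  have rhs: "(\<Sum>x<n. p x * ln (q' x / q x)) = (\<Sum>x<n. p x * K x) - (\<Sum>x<n. p x * L x) - lam * (\<Sum>x<n. s x * p x) - ln Z"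
  proof -
    have "(\<Sum>x<n. p x * ln (q' x / q x)) = (\<Sum>x<n. p x * (g x - ln Z))" using lnr by simp
    also have "\<dots> = (\<Sum>x<n. p x * K x) - (\<Sum>x<n. p x * L x) - lam * (\<Sum>x<n. s x * p x) - ln Z * (\<Sum>x<n. p x)"
      unfolding g_def by (simp add: algebra_simps sum.distrib sum_subtractf sum_distrib_left sum_distrib_right)
    finally show ?thesis using p1 by simp
  qed
  have hol: "holevo n m rho p = - Re (mtrace (mix n m rho p * mat_ln (mix n m rho p))) + (\<Sum>x<n. p x * K x)"
    unfolding holevo_def vn_entropy_def K_def by (simp add: sum_negf)
  have PL: "(\<Sum>x<n. p x * L x) = Re (mtrace (mix n m rho p * Lq))"
  proof -
    have "mtrace (mix n m rho p * Lq) = (\<Sum>x<n. complex_of_real (p x) * mtrace (rho x * Lq))"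
      by (rule mix_trace_mult[OF rc Lq])
    thus ?thesis unfolding L_def by (simp add: Re_sum)
  qed
  have gb: "Re (mtrace (mix n m rho p * Lq)) \<le> Re (mtrace (mix n m rho p * mat_ln (mix n m rho p)))"
    unfolding Lq_def by (rule gibbs[OF rho p q])
  show ?thesis
    unfolding q_def[symmetric] q'_def[symmetric] f rhs hol using PL gb by linarith
qed


end
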